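(* Let $k,k'\ge1$ be integers. For $X\in\mathcal{P}$ let $\mathcal{C}^{-1}(X)=\{(P,Q)\in\mathcal{P}^2:[P,Q]\in\{2iX,-2iX\}\}$ and $\mathcal{S}_X=\mathcal{C}^{-1}(X)\cap(\mathcal{P}_k\times\mathcal{P}_{k'})$. For $(P,Q)\in\mathcal{S}_X$ define its type as $(|\mathrm{supp}(P)|,|\mathrm{supp}(P)\cap\mathrm{supp}(Q)|)$, and let $\mathcal{S}_X[j,l]$ be the set of elements of $\mathcal{S}_X$ of type $(j,l)$. Then: (a) for every $X\in\mathcal{P}$ there are at most $k^2$ distinct types among elements of $\mathcal{S}_X$; (b) if $(P,Q),(P',Q')\in\mathcal{S}_X[j,l]$, then $\mathrm{supp}(P)\cap\mathrm{supp}(Q')\neq\varnothing$.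
   Context: $\mathcal{P}$ denotes the set of $n$-fold tensor products of Pauli matrices $\{I,\sigma_x,\sigma_y,\sigma_z\}$; $\mathrm{supp}(P)\subseteq[n]$ is the set of qubits on which $P$ acts non-trivially; $\mathcal{P}_j$ is the set of Paulis with $|\mathrm{supp}|\le j$. $[A,B]=AB-BA$. *)

theory Defs
  imports Complex_Main "Jordan_Normal_Form.Matrix"
begin

datatype pauli1 = PI | PX | PY | PZ

definition pmat1 :: "pauli1 \<Rightarrow> complex mat" where
  "pmat1 a = (case a of
      PI \<Rightarrow> mat_of_rows_list 2 [[1, 0], [0, 1]]
    | PX \<Rightarrow> mat_of_rows_list 2 [[0, 1], [1, 0]]
    | PY \<Rightarrow> mat_of_rows_list 2 [[0, -\<i>], [\<i>, 0]]
    | PZ \<Rightarrow> mat_of_rows_list 2 [[1, 0], [0, -1]])"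

definition kron :: "complex mat \<Rightarrow> complex mat \<Rightarrow> complex mat" where
  "kron A B = mat (dim_row A * dim_row B) (dim_col A * dim_col B)
     (\<lambda>(i, j). A $$ (i div dim_row B, j div dim_col B) * B $$ (i mod dim_row B, j mod dim_col B))"

definition pauli_mat :: "pauli1 list \<Rightarrow> complex mat" where
  "pauli_mat ps = foldr (\<lambda>a M. kron (pmat1 a) M) ps (1\<^sub>m 1)"

text \<open>The set of n-qubit Pauli strings (the set P), represented by their labels.\<close>
definition paulis :: "nat \<Rightarrow> pauli1 list set" where
  "paulis n = {ps. length ps = n}"

definition supp :: "pauli1 list \<Rightarrow> nat set" where
  "supp ps = {i. i < length ps \<and> ps ! i \<noteq> PI}"

definition paulis_le :: "nat \<Rightarrow> nat \<Rightarrow> pauli1 list set" where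
  "paulis_le n j = {ps \<in> paulis n. card (supp ps) \<le> j}"

definition commutator :: "complex mat \<Rightarrow> complex mat \<Rightarrow> complex mat" where
  "commutator A B = A * B - B * A"

definition C_inv :: "nat \<Rightarrow> pauli1 list \<Rightarrow> (pauli1 list \<times> pauli1 list) set" where
  "C_inv n X = {(P, Q). P \<in> paulis n \<and> Q \<in> paulis n \<and>
     commutator (pauli_mat P) (pauli_mat Q) \<in>
       {(2 * \<i>) \<cdot>\<^sub>m pauli_mat X, (- 2 * \<i>) \<cdot>\<^sub>m pauli_mat X}}"

definition S_X :: "nat \<Rightarrow> nat \<Rightarrow> nat \<Rightarrow> pauli1 list \<Rightarrow> (pauli1 list \<times> pauli1 list) set" where
  "S_X n k k' X = C_inv n X \<inter> (paulis_le n k \<times> paulis_le n k')"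

definition ptype :: "pauli1 list \<times> pauli1 list \<Rightarrow> nat \<times> nat" where
  "ptype pq = (card (supp (fst pq)), card (supp (fst pq) \<inter> supp (snd pq)))"

definition S_X_type :: "nat \<Rightarrow> nat \<Rightarrow> nat \<Rightarrow> pauli1 list \<Rightarrow> nat \<Rightarrow> nat \<Rightarrow> (pauli1 list \<times> pauli1 list) set" where
  "S_X_type n k k' X j l = {pq \<in> S_X n k k' X. ptype pq = (j, l)}"

end

theory Submission
  imports Defs
begin


lemma sum_div_mod: fixes p q :: nat shows "(\<Sum>w<p*q. f (w div q) (w mod q)) = (\<Sum>u<p. \<Sum>v<q. f u v :: 'a::comm_monoid_add)"
proof (induction p)
  case 0 then show ?case by simp
next
  case (Suc p)
  have "{..<Suc p * q} = {..<p*q} \<union> {p*q..<p*q+q}" by auto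
  hence "(\<Sum>w<Suc p*q. f (w div q) (w mod q)) = (\<Sum>w<p*q. f (w div q) (w mod q)) + (\<Sum>w\<in>{p*q..<p*q+q}. f (w div q) (w mod q))"
    by (simp add: sum.union_disjoint ivl_disj_int)
  also have "(\<Sum>w\<in>{p*q..<p*q+q}. f (w div q) (w mod q)) = (\<Sum>v<q. f p v)"
  proof -
    have "(\<Sum>w\<in>{p*q..<p*q+q}. f (w div q) (w mod q)) = (\<Sum>v\<in>{..<q}. f ((v + p*q) div q) ((v+p*q) mod q))"
      by (rule sum.reindex_bij_witness[of _ "\<lambda>v. v + p*q" "\<lambda>w. w - p*q"]) auto
    also have "\<dots> = (\<Sum>v<q. f p v)"
      by (rule sum.cong) auto
    finally show ?thesis .
  qed
  finally show ?case using Suc by simp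
qed

lemma kron_carrier: "kron A B \<in> carrier_mat (dim_row A * dim_row B) (dim_col A * dim_col B)"
  by (simp add: kron_def)

lemma kron_index: "i < dim_row A * dim_row B \<Longrightarrow> j < dim_col A * dim_col B \<Longrightarrow>
   kron A B $$ (i,j) = A $$ (i div dim_row B, j div dim_col B) * B $$ (i mod dim_row B, j mod dim_col B)"
  by (simp add: kron_def)

lemma kron_mult:
  assumes A: "A \<in> carrier_mat p p" and C: "C \<in> carrier_mat p p" and B: "B \<in> carrier_mat q q" and D: "D \<in> carrier_mat q q"
  shows "kron A B * kron C D = kron (A * C) (B * D)"
proof (rule eq_matI)
  show "dim_row (kron A B * kron C D) = dim_row (kron (A * C) (B * D))" using assms by (simp add: kron_def)
  show "dim_col (kron A B * kron C D) = dim_col (kron (A * C) (B * D))" using assms by (simp add: kron_def)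
  fix i j assume i: "i < dim_row (kron (A * C) (B * D))" and j: "j < dim_col (kron (A * C) (B * D))"
  have ip: "i < p*q" and jp: "j < p*q" using i j assms by (auto simp: kron_def)
  have qpos: "q > 0" using ip by (cases q) auto
  have idq: "i div q < p" "j div q < p" using ip jp by (auto simp: less_mult_imp_div_less)
  have imq: "i mod q < q" "j mod q < q" using qpos by auto
  have "(kron A B * kron C D) $$ (i,j) = (\<Sum>w<p*q. kron A B $$ (i,w) * kron C D $$ (w,j))"
    using assms ip jp by (simp add: kron_def scalar_prod_def times_mat_def atLeast0LessThan)
  also have "\<dots> = (\<Sum>w<p*q. (A $$ (i div q, w div q) * C $$ (w div q, j div q)) * (B $$ (i mod q, w mod q) * D $$ (w mod q, j mod q)))"
    using assms ip jp by (intro sum.cong) (auto simp: kron_def)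
  also have "\<dots> = (\<Sum>u<p. \<Sum>v<q. (A $$ (i div q, u) * C $$ (u, j div q)) * (B $$ (i mod q, v) * D $$ (v, j mod q)))"
    by (rule sum_div_mod)
  also have "\<dots> = (\<Sum>u<p. A $$ (i div q, u) * C $$ (u, j div q)) * (\<Sum>v<q. B $$ (i mod q, v) * D $$ (v, j mod q))"
    by (simp add: sum_product)
  also have "\<dots> = (A*C) $$ (i div q, j div q) * (B*D) $$ (i mod q, j mod q)"
    using assms idq imq by (simp add: scalar_prod_def times_mat_def atLeast0LessThan)
  also have "\<dots> = kron (A * C) (B * D) $$ (i,j)"
    using assms ip jp by (simp add: kron_def)
  finally show "(kron A B * kron C D) $$ (i,j) = kron (A * C) (B * D) $$ (i,j)" .
qed

lemma div_lt_aux: "(i::nat) < a * b \<Longrightarrow> i div b < a"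
  by (simp add: less_mult_imp_div_less)
lemma mod_lt_aux: "(i::nat) < a * b \<Longrightarrow> i mod b < b"
  by (cases b) auto

lemma kron_smult: "kron (a \<cdot>\<^sub>m A) (b \<cdot>\<^sub>m B) = (a*b) \<cdot>\<^sub>m kron A B"
  by (rule eq_matI) (auto simp: kron_def div_lt_aux mod_lt_aux)

lemma kron_one: "kron (1\<^sub>m p) (1\<^sub>m q) = 1\<^sub>m (p*q)"
proof (rule eq_matI)
  fix i j assume "i < dim_row (1\<^sub>m (p*q))" "j < dim_col (1\<^sub>m (p*q))"
  hence ij: "i < p*q" "j < p*q" by auto
  hence qpos: "q > 0" by (cases q) auto
  have "i div q < p" "j div q < p" using ij by (auto simp: less_mult_imp_div_less)
  moreover have "(i div q = j div q \<and> i mod q = j mod q) = (i = j)" by (metis div_mult_mod_eq)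
  ultimately show "kron (1\<^sub>m p) (1\<^sub>m q) $$ (i, j) = 1\<^sub>m (p * q) $$ (i, j)"
    using ij qpos by (auto simp: kron_def)
qed (auto simp: kron_def)



fun pm :: "pauli1 \<Rightarrow> pauli1 \<Rightarrow> pauli1" where
  "pm PI b = b" | "pm a PI = a"
| "pm PX PX = PI" | "pm PX PY = PZ" | "pm PX PZ = PY"
| "pm PY PX = PZ" | "pm PY PY = PI" | "pm PY PZ = PX"
| "pm PZ PX = PY" | "pm PZ PY = PX" | "pm PZ PZ = PI"

fun ph :: "pauli1 \<Rightarrow> pauli1 \<Rightarrow> complex" where
  "ph PX PY = \<i>" | "ph PY PX = -\<i>"
| "ph PY PZ = \<i>" | "ph PZ PY = -\<i>"
| "ph PZ PX = \<i>" | "ph PX PZ = -\<i>"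
| "ph _ _ = 1"

definition anti :: "pauli1 \<Rightarrow> pauli1 \<Rightarrow> bool" where
  "anti a b \<longleftrightarrow> a \<noteq> PI \<and> b \<noteq> PI \<and> a \<noteq> b"

lemma mat2_eqI:
  assumes "A \<in> carrier_mat 2 2" "B \<in> carrier_mat 2 2"
   "A $$ (0,0) = B $$ (0,0)" "A $$ (0,1) = B $$ (0,1)" "A $$ (1,0) = B $$ (1,0)" "A $$ (1,1) = B $$ (1,1)"
  shows "A = B"
proof (rule eq_matI)
  fix i j assume "i < dim_row B" "j < dim_col B"
  hence "i < 2" "j < 2" using assms by auto
  thus "A $$ (i,j) = B $$ (i,j)" using assms by (auto simp: less_2_cases_iff)
qed (use assms in auto)

lemma mult2_index: "A \<in> carrier_mat 2 2 \<Longrightarrow> B \<in> carrier_mat 2 2 \<Longrightarrow> i < 2 \<Longrightarrow> j < 2 \<Longrightarrow>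
  (A * B) $$ (i,j) = A $$ (i,0) * B $$ (0,j) + A $$ (i,1) * B $$ (1,j)"
  by (simp add: scalar_prod_def times_mat_def numeral_2_eq_2)

lemma pmat1_carrier: "pmat1 a \<in> carrier_mat 2 2"
  by (cases a) (auto simp: pmat1_def mat_of_rows_list_def)

lemma pmat1_mult: "pmat1 a * pmat1 b = ph a b \<cdot>\<^sub>m pmat1 (pm a b)"
  apply (rule mat2_eqI)
  apply (rule mult_carrier_mat[OF pmat1_carrier pmat1_carrier])
  apply (simp add: pmat1_carrier)
  apply (simp_all add: mult2_index[OF pmat1_carrier pmat1_carrier])
  apply (cases a; cases b; simp add: pmat1_def mat_of_rows_list_def)+
  done



fun pmul :: "pauli1 list \<Rightarrow> pauli1 list \<Rightarrow> pauli1 list" where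
  "pmul (a#P) (b#Q) = pm a b # pmul P Q" | "pmul _ _ = []"

fun phase :: "pauli1 list \<Rightarrow> pauli1 list \<Rightarrow> complex" where
  "phase (a#P) (b#Q) = ph a b * phase P Q" | "phase _ _ = 1"

lemma pauli_mat_Cons: "pauli_mat (a#P) = kron (pmat1 a) (pauli_mat P)"
  by (simp add: pauli_mat_def)

lemma pauli_mat_carrier: "pauli_mat P \<in> carrier_mat (2^length P) (2^length P)"
proof (induction P)
  case Nil then show ?case by (simp add: pauli_mat_def)
next
  case (Cons a P)
  then show ?case using pmat1_carrier[of a]
    by (auto simp: pauli_mat_Cons kron_def)
qed

lemma pm_comm: "pm a b = pm b a" by (cases a; cases b) auto
lemma pm_cancel: "pm a (pm a b) = b" by (cases a; cases b) auto
lemma pm_self: "pm a a = PI" by (cases a) auto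
lemma ph_self: "ph a a = 1" by (cases a) auto
lemma ph_comm: "\<not> anti a b \<Longrightarrow> ph b a = ph a b" by (cases a; cases b) (auto simp: anti_def)
lemma ph_PI: "ph a PI = 1" "ph PI a = 1" by (cases a; simp)+

lemma length_pmul: "length P = length Q \<Longrightarrow> length (pmul P Q) = length P"
  by (induction P Q rule: pmul.induct) auto

lemma pmul_comm: "pmul Q P = pmul P Q"
  by (induction P Q rule: pmul.induct) (auto simp: pm_comm)

lemma nth_pmul: "length P = length Q \<Longrightarrow> i < length P \<Longrightarrow> pmul P Q ! i = pm (P!i) (Q!i)"
  by (induction P Q arbitrary: i rule: pmul.induct) (auto simp: nth_Cons split: nat.splits)

lemma smult_one_mat: "1 \<cdot>\<^sub>m (A :: complex mat) = A"
  by (rule eq_matI) auto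

lemma pauli_mult: "length P = length Q \<Longrightarrow>
   pauli_mat P * pauli_mat Q = phase P Q \<cdot>\<^sub>m pauli_mat (pmul P Q)"
proof (induction P Q rule: pmul.induct)
  case (1 a P b Q)
  hence IH: "pauli_mat P * pauli_mat Q = phase P Q \<cdot>\<^sub>m pauli_mat (pmul P Q)" and l: "length P = length Q" by auto
  have "pauli_mat (a#P) * pauli_mat (b#Q) = kron (pmat1 a * pmat1 b) (pauli_mat P * pauli_mat Q)"
    unfolding pauli_mat_Cons
    using kron_mult[OF pmat1_carrier pmat1_carrier, of "pauli_mat P" "2^length P" "pauli_mat Q"]
      pauli_mat_carrier[of P] pauli_mat_carrier[of Q] l by simp
  also have "\<dots> = kron (ph a b \<cdot>\<^sub>m pmat1 (pm a b)) (phase P Q \<cdot>\<^sub>m pauli_mat (pmul P Q))"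
    by (simp add: IH pmat1_mult)
  also have "\<dots> = phase (a#P) (b#Q) \<cdot>\<^sub>m pauli_mat (pmul (a#P) (b#Q))"
    by (simp add: kron_smult pauli_mat_Cons)
  finally show ?case .
next
qed (auto simp: pauli_mat_def smult_one_mat)

lemma phase_comm: "length P = length Q \<Longrightarrow> (\<forall>i<length P. \<not> anti (P!i) (Q!i)) \<Longrightarrow> phase Q P = phase P Q"
proof (induction P Q rule: pmul.induct)
  case (1 a P b Q)
  have "\<not> anti a b" using "1.prems"(2) by (metis length_Cons nth_Cons_0 zero_less_Suc)
  moreover have "\<forall>i<length P. \<not> anti (P!i) (Q!i)" using "1.prems"(2) by fastforce
  ultimately show ?case using 1 by (simp add: ph_comm)
qed auto

lemma pmul_self: "pmul P P = replicate (length P) PI"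
  by (induction P) (auto simp: pm_self)
lemma phase_self: "phase P P = 1"
  by (induction P) (auto simp: ph_self)

lemma pmat1_PI: "pmat1 PI = 1\<^sub>m 2"
  by (rule mat2_eqI) (auto simp: pmat1_def mat_of_rows_list_def)

lemma pauli_mat_id: "pauli_mat (replicate n PI) = 1\<^sub>m (2^n)"
  by (induction n) (auto simp: pauli_mat_def pmat1_PI kron_one)

lemma pauli_sq: "pauli_mat P * pauli_mat P = 1\<^sub>m (2^length P)"
  by (simp add: pauli_mult pmul_self phase_self pauli_mat_id smult_one_mat)

lemma smult_pauli_eq:
  assumes "c \<cdot>\<^sub>m pauli_mat X = d \<cdot>\<^sub>m pauli_mat X" shows "c = d"
proof -
  have "(c \<cdot>\<^sub>m pauli_mat X) * pauli_mat X = (d \<cdot>\<^sub>m pauli_mat X) * pauli_mat X" using assms by simp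
  hence "c \<cdot>\<^sub>m 1\<^sub>m (2^length X) = d \<cdot>\<^sub>m (1\<^sub>m (2^length X) :: complex mat)"
    using mult_smult_assoc_mat[OF pauli_mat_carrier pauli_mat_carrier] pauli_sq by metis
  hence "(c \<cdot>\<^sub>m 1\<^sub>m (2^length X)) $$ (0,0) = (d \<cdot>\<^sub>m (1\<^sub>m (2^length X) :: complex mat)) $$ (0,0)" by simp
  thus ?thesis by simp
qed

lemma phase_id: "length R = m \<Longrightarrow> phase R (replicate m PI) = 1"
  by (induction R arbitrary: m) (auto simp: ph_PI)

lemma phase_single: "length R = n \<Longrightarrow> t < n \<Longrightarrow> phase R ((replicate n PI)[t := b]) = ph (R!t) b"
proof (induction R arbitrary: n t)
  case Nil then show ?case by simp
next
  case (Cons a R)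
  then obtain m where n: "n = Suc m" by auto
  show ?case
  proof (cases t)
    case 0 then show ?thesis using Cons n by (simp add: phase_id)
  next
    case (Suc s) then show ?thesis using Cons n by (simp add: ph_PI)
  qed
qed



lemma ph_letter: "(\<And>b. ph r b * ph b x = ph b r * ph x b) \<Longrightarrow> r = x"
proof -
  assume h: "\<And>b. ph r b * ph b x = ph b r * ph x b"
  note h1 = h[of PX] and h2 = h[of PY] and h3 = h[of PZ]
  show ?thesis using h1 h2 h3 by (cases r; cases x; simp)
qed

lemma phase_id2: "length R = m \<Longrightarrow> phase (replicate m PI) R = 1"
  by (induction R arbitrary: m) (auto simp: ph_PI)

lemma phase_single2: "length R = n \<Longrightarrow> t < n \<Longrightarrow> phase ((replicate n PI)[t := b]) R = ph b (R!t)"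
proof (induction R arbitrary: n t)
  case Nil then show ?case by simp
next
  case (Cons a R)
  then obtain m where n: "n = Suc m" by auto
  have pid: "phase (replicate m PI) R = 1" using Cons n by (simp add: phase_id2)
  show ?case
  proof (cases t)
    case 0 then show ?thesis using Cons n pid by simp
  next
    case (Suc s) then show ?thesis using Cons n by (simp add: ph_PI)
  qed
qed

lemma smult_smult_mat: "a \<cdot>\<^sub>m (b \<cdot>\<^sub>m (A :: complex mat)) = (a*b) \<cdot>\<^sub>m A"
  by (rule eq_matI) auto

lemma pauli_inj:
  assumes l: "length R = length X" and c: "c \<noteq> 0" and e: "c \<cdot>\<^sub>m pauli_mat R = d \<cdot>\<^sub>m pauli_mat X"
  shows "R = X"
proof (rule nth_equalityI)
  show "length R = length X" by (rule l)
  fix t assume t: "t < length R"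
  show "R ! t = X ! t"
  proof (rule ph_letter)
    fix b
    define n where "n = length R"
    define T where "T = (replicate n PI)[t := b]"
    have lT: "length T = n" by (simp add: T_def)
    define U where "U = pmul R T"
    define V where "V = pmul X T"
    define \<alpha> where "\<alpha> = ph (R!t) b"
    define \<beta> where "\<beta> = ph b (R!t)"
    define \<gamma> where "\<gamma> = ph (X!t) b"
    define \<delta> where "\<delta> = ph b (X!t)"
    have pa: "phase R T = \<alpha>" unfolding T_def \<alpha>_def using t n_def by (simp add: phase_single)
    have pb: "phase T R = \<beta>" unfolding T_def \<beta>_def using t n_def by (simp add: phase_single2)
    have pc: "phase X T = \<gamma>" unfolding T_def \<gamma>_def using t n_def l by (simp add: phase_single)
    have pd: "phase T X = \<delta>" unfolding T_def \<delta>_def using t n_def l by (simp add: phase_single2)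
    have cR: "pauli_mat R \<in> carrier_mat (2^n) (2^n)" using pauli_mat_carrier[of R] n_def by simp
    have cX: "pauli_mat X \<in> carrier_mat (2^n) (2^n)" using pauli_mat_carrier[of X] n_def l by simp
    have cT: "pauli_mat T \<in> carrier_mat (2^n) (2^n)" using pauli_mat_carrier[of T] lT by simp
    have "(c \<cdot>\<^sub>m pauli_mat R) * pauli_mat T = (d \<cdot>\<^sub>m pauli_mat X) * pauli_mat T" using e by simp
    hence "c \<cdot>\<^sub>m (pauli_mat R * pauli_mat T) = d \<cdot>\<^sub>m (pauli_mat X * pauli_mat T)"
      using mult_smult_assoc_mat[OF cR cT] mult_smult_assoc_mat[OF cX cT] by metis
    hence E1: "(c*\<alpha>) \<cdot>\<^sub>m pauli_mat U = (d*\<gamma>) \<cdot>\<^sub>m pauli_mat V"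
      using pauli_mult[of R T] pauli_mult[of X T] lT n_def l pa pc U_def V_def by (simp add: smult_smult_mat)
    have "pauli_mat T * (c \<cdot>\<^sub>m pauli_mat R) = pauli_mat T * (d \<cdot>\<^sub>m pauli_mat X)" using e by simp
    hence "c \<cdot>\<^sub>m (pauli_mat T * pauli_mat R) = d \<cdot>\<^sub>m (pauli_mat T * pauli_mat X)"
      using mult_smult_distrib[OF cT cR] mult_smult_distrib[OF cT cX] by metis
    hence E2: "(c*\<beta>) \<cdot>\<^sub>m pauli_mat U = (d*\<delta>) \<cdot>\<^sub>m pauli_mat V"
      using pauli_mult[of T R] pauli_mult[of T X] lT n_def l pb pd U_def V_def pmul_comm by (simp add: smult_smult_mat)
    have "(c*\<alpha>*\<delta>) \<cdot>\<^sub>m pauli_mat U = (d*\<gamma>*\<delta>) \<cdot>\<^sub>m pauli_mat V"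
      using arg_cong[OF E1, of "\<lambda>M. \<delta> \<cdot>\<^sub>m M"] by (simp add: smult_smult_mat mult_ac)
    moreover have "(c*\<beta>*\<gamma>) \<cdot>\<^sub>m pauli_mat U = (d*\<gamma>*\<delta>) \<cdot>\<^sub>m pauli_mat V"
      using arg_cong[OF E2, of "\<lambda>M. \<gamma> \<cdot>\<^sub>m M"] by (simp add: smult_smult_mat mult_ac)
    ultimately have "c*\<alpha>*\<delta> = c*\<beta>*\<gamma>" using smult_pauli_eq by metis
    hence "\<alpha>*\<delta> = \<beta>*\<gamma>" using c by (simp add: mult.assoc)
    thus "ph (R ! t) b * ph b (X ! t) = ph b (R ! t) * ph (X ! t) b"
      by (simp add: \<alpha>_def \<beta>_def \<gamma>_def \<delta>_def mult.commute)
  qed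
qed

lemma C_inv_char:
  assumes PQ: "(P, Q) \<in> C_inv n X" and X: "X \<in> paulis n"
  shows "length P = n \<and> length Q = n \<and> pmul P Q = X \<and> (\<exists>i<n. anti (P!i) (Q!i))"
proof -
  have lP: "length P = n" and lQ: "length Q = n" and lX: "length X = n"
    using PQ X by (auto simp: C_inv_def paulis_def)
  obtain c where c: "c \<noteq> 0" and cm: "commutator (pauli_mat P) (pauli_mat Q) = c \<cdot>\<^sub>m pauli_mat X"
  proof -
    have "commutator (pauli_mat P) (pauli_mat Q) = (2*\<i>) \<cdot>\<^sub>m pauli_mat X \<or>
          commutator (pauli_mat P) (pauli_mat Q) = (-2*\<i>) \<cdot>\<^sub>m pauli_mat X"
      using PQ by (auto simp: C_inv_def)
    then show ?thesis using that[of "2*\<i>"] that[of "-2*\<i>"] by auto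
  qed
  define U where "U = pmul P Q"
  have lU: "length U = n" using lP lQ by (simp add: U_def length_pmul)
  have cU: "pauli_mat U \<in> carrier_mat (2^n) (2^n)" using pauli_mat_carrier[of U] lU by simp
  have comm: "commutator (pauli_mat P) (pauli_mat Q) = (phase P Q - phase Q P) \<cdot>\<^sub>m pauli_mat U"
    unfolding commutator_def using pauli_mult[of P Q] pauli_mult[of Q P] lP lQ pmul_comm[of Q P] cU
    by (auto simp: U_def intro!: eq_matI simp: algebra_simps)
  have ex: "\<exists>i<n. anti (P!i) (Q!i)"
  proof (rule ccontr)
    assume "\<not> ?thesis"
    hence "phase Q P = phase P Q" using phase_comm[of P Q] lP lQ by auto
    hence "c \<cdot>\<^sub>m pauli_mat X = 0 \<cdot>\<^sub>m pauli_mat X"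
      using comm cm cU lX pauli_mat_carrier[of X] by (auto intro!: eq_matI)
    hence "c = 0" by (rule smult_pauli_eq)
    thus False using c by simp
  qed
  have "c \<cdot>\<^sub>m pauli_mat X = (phase P Q - phase Q P) \<cdot>\<^sub>m pauli_mat U" using comm cm by simp
  hence "X = U" using pauli_inj lX lU c by metis
  thus ?thesis using lP lQ ex U_def by simp
qed



lemma pm_PI_iff: "pm a b = PI \<longleftrightarrow> a = b" by (cases a; cases b) auto

lemma Q_nth:
  assumes "length P = n" "length Q = n" "pmul P Q = X" "i < n"
  shows "Q!i = pm (P!i) (X!i)"
  using nth_pmul[of P Q i] assms pm_cancel by metis

definition Bs :: "nat \<Rightarrow> pauli1 list \<Rightarrow> pauli1 list \<Rightarrow> nat set" where
  "Bs n X P = {i. i < n \<and> P!i \<noteq> PI \<and> P!i = X!i}"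

lemma card_split:
  assumes "length P = n" "length Q = n" "pmul P Q = X"
  shows "card (supp P) = card (supp P \<inter> supp Q) + card (Bs n X P)"
proof -
  have eq: "supp P = (supp P \<inter> supp Q) \<union> Bs n X P"
    using assms Q_nth[OF assms] by (auto simp: supp_def Bs_def pm_PI_iff)
  have dis: "(supp P \<inter> supp Q) \<inter> Bs n X P = {}"
    using assms Q_nth[OF assms] by (auto simp: supp_def Bs_def pm_self)
  have f: "finite (supp P \<inter> supp Q)" "finite (Bs n X P)" by (auto simp: supp_def Bs_def)
  show ?thesis using card_Un_disjoint[OF f dis] eq by simp
qed

theorem lemma3p8:
  fixes n k k' :: nat and X :: "pauli1 list"
  assumes "k \<ge> 1" and "k' \<ge> 1" and "X \<in> paulis n"
  shows "card (ptype ` S_X n k k' X) \<le> k ^ 2 \<and>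
    (\<forall>P Q P' Q' j l. (P, Q) \<in> S_X_type n k k' X j l \<longrightarrow> (P', Q') \<in> S_X_type n k k' X j l
           \<longrightarrow> supp P \<inter> supp Q' \<noteq> {})"
proof
  have lX: "length X = n" using assms(3) by (simp add: paulis_def)
  have "ptype ` S_X n k k' X \<subseteq> {1..k} \<times> {1..k}"
  proof
    fix t assume "t \<in> ptype ` S_X n k k' X"
    then obtain P Q where PQ: "(P,Q) \<in> S_X n k k' X" and t: "t = ptype (P,Q)" by auto
    have ch: "length P = n \<and> length Q = n \<and> pmul P Q = X \<and> (\<exists>i<n. anti (P!i) (Q!i))"
      using C_inv_char[of P Q n X] PQ assms(3) by (simp add: S_X_def)
    then obtain i where i: "i < n" "anti (P!i) (Q!i)" by auto
    have iin: "i \<in> supp P \<inter> supp Q" using i ch by (auto simp: supp_def anti_def)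
    have fin: "finite (supp P)" "finite (supp P \<inter> supp Q)" by (auto simp: supp_def)
    have "card (supp P \<inter> supp Q) > 0" using iin fin(2) card_gt_0_iff by blast
    hence l1: "card (supp P \<inter> supp Q) \<ge> 1" by linarith
    have l2: "card (supp P \<inter> supp Q) \<le> card (supp P)" using fin by (intro card_mono) auto
    have l3: "card (supp P) \<le> k" using PQ by (simp add: S_X_def paulis_le_def)
    show "t \<in> {1..k} \<times> {1..k}" using l1 l2 l3 t by (simp add: ptype_def)
  qed
  hence "card (ptype ` S_X n k k' X) \<le> card ({1..k} \<times> {1..k})"
    using card_mono[OF finite_cartesian_product[OF finite_atLeastAtMost finite_atLeastAtMost]] by blast
  moreover have "card ({1..k} \<times> {1..k}) = k ^ 2" by (simp add: card_cartesian_product power2_eq_square)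
  ultimately show "card (ptype ` S_X n k k' X) \<le> k ^ 2" by simp
next
  have lX: "length X = n" using assms(3) by (simp add: paulis_def)
  show "\<forall>P Q P' Q' j l. (P, Q) \<in> S_X_type n k k' X j l \<longrightarrow> (P', Q') \<in> S_X_type n k k' X j l
           \<longrightarrow> supp P \<inter> supp Q' \<noteq> {}"
  proof (intro allI impI notI)
    fix P Q P' Q' j l
    assume A: "(P, Q) \<in> S_X_type n k k' X j l" and A': "(P', Q') \<in> S_X_type n k k' X j l"
      and E: "supp P \<inter> supp Q' = {}"
    have ch: "length P = n \<and> length Q = n \<and> pmul P Q = X \<and> (\<exists>i<n. anti (P!i) (Q!i))"
      using C_inv_char[of P Q n X] A assms(3) by (simp add: S_X_def S_X_type_def)
    have ch': "length P' = n \<and> length Q' = n \<and> pmul P' Q' = X \<and> (\<exists>i<n. anti (P'!i) (Q'!i))"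
      using C_inv_char[of P' Q' n X] A' assms(3) by (simp add: S_X_def S_X_type_def)
    have ty: "card (supp P) = j" "card (supp P \<inter> supp Q) = l"
      "card (supp P') = j" "card (supp P' \<inter> supp Q') = l"
      using A A' by (auto simp: S_X_type_def ptype_def)
    have c1: "card (Bs n X P) = card (Bs n X P')"
      using card_split[of P n Q X] card_split[of P' n Q' X] ch ch' ty by simp
    obtain i0 where i0: "i0 < n" "anti (P!i0) (Q!i0)" using ch by auto
    have Qn: "\<And>i. i < n \<Longrightarrow> Q!i = pm (P!i) (X!i)" using Q_nth ch by blast
    have Qn': "\<And>i. i < n \<Longrightarrow> Q'!i = pm (P'!i) (X!i)" using Q_nth ch' by blast
    have key: "\<And>i. i < n \<Longrightarrow> P!i \<noteq> PI \<Longrightarrow> P'!i = X!i"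
    proof -
      fix i assume i: "i < n" "P!i \<noteq> PI"
      hence "i \<in> supp P" using ch by (simp add: supp_def)
      hence "i \<notin> supp Q'" using E by auto
      hence "Q'!i = PI" using i ch' by (simp add: supp_def)
      thus "P'!i = X!i" using Qn'[OF i(1)] by (simp add: pm_PI_iff)
    qed
    have "insert i0 (Bs n X P) \<subseteq> Bs n X P'"
    proof
      fix i assume "i \<in> insert i0 (Bs n X P)"
      thus "i \<in> Bs n X P'"
      proof
        assume "i = i0"
        have "X!i0 = pm (P!i0) (Q!i0)" using nth_pmul[of P Q i0] ch i0 by simp
        hence "X!i0 \<noteq> PI" using i0(2) by (simp add: anti_def pm_PI_iff)
        moreover have "P!i0 \<noteq> PI" using i0(2) by (simp add: anti_def)
        ultimately show ?thesis using key[OF i0(1)] i0(1) `i = i0` by (simp add: Bs_def)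
      next
        assume "i \<in> Bs n X P"
        hence h: "i < n" "P!i \<noteq> PI" "P!i = X!i" unfolding Bs_def by blast+
        have "P'!i = X!i" using key[of i] h by blast
        moreover have "X!i \<noteq> PI" using h by simp
        ultimately show ?thesis using h(1) unfolding Bs_def by simp
      qed
    qed
    moreover have "i0 \<notin> Bs n X P"
    proof
      assume "i0 \<in> Bs n X P"
      hence "P!i0 = X!i0" by (simp add: Bs_def)
      hence "Q!i0 = PI" using Qn[OF i0(1)] by (simp add: pm_self)
      thus False using i0(2) by (simp add: anti_def)
    qed
    moreover have "finite (Bs n X P')" "finite (Bs n X P)" by (simp_all add: Bs_def)
    ultimately have "card (Bs n X P) + 1 \<le> card (Bs n X P')"
      using card_mono[of "Bs n X P'" "insert i0 (Bs n X P)"] by simp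
    thus False using c1 by simp
  qed
qed


end
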